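(* Let $q$ be a prime power, $1\le k$, $d\ge1$, $k+d<n\le m$, let $g_1,\dots,g_n\in\mathbb{F}_{q^m}$ be linearly independent over $\mathbb{F}_q$, and let $\mathcal{G}$ be the Gabidulin code of dimension $k$ with respect to $g_1,\dots,g_n$. Let $$f(x)=x^{q^{k+d}}-a_1x^{q^{k+d-1}}+a_2x^{q^{k+d-2}}-\cdots+(-1)^da_dx^{q^k}+\sum_{i=0}^{k-1}c_ix^{q^i}$$ with $a_j,c_i\in\mathbb{F}_{q^m}$, and $\sigma_f=(f(g_1),\dots,f(g_n))$. Then $d_R(\sigma_f,\mathcal{G})=n-(k+d)$ if and only if there exist $\mathbb{F}_q$-linearly independent $\beta_1,\dots,\beta_{k+d}\in\langle g_1,\dots,g_n\rangle$ such that for all $1\le i\le d$, $$a_i=\frac{\det\mathcal{R}_{k+d-i}(\beta_1,\dots,\beta_{k+d})}{\det M_{k+d}(\beta_1,\dots,\beta_{k+d})}.$$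
   Context: For $\beta_1,\dots,\beta_s\in\mathbb{F}_{q^m}$, the $t\times s$ Moore matrix $M_t(\beta_1,\dots,\beta_s)$ has $(i,j)$ entry $\beta_j^{q^{i-1}}$, $1\le i\le t$. For $0\le j\le s$, $\mathcal{R}_j(\beta_1,\dots,\beta_s)$ denotes the $s\times s$ matrix obtained from $M_{s+1}(\beta_1,\dots,\beta_s)$ by deleting the row $(\beta_1^{q^j},\dots,\beta_s^{q^j})$. $\mathcal{L}_q(x,\mathbb{F}_{q^m})$ is the set of $q$-linearized polynomials $\sum_i a_ix^{q^i}$ over $\mathbb{F}_{q^m}$, $q$-degree being the largest $i$ with $a_i\ne0$. Rank distance: $d_R(\mathbf{u},\mathbf{v})=\dim_{\mathbb{F}_q}\langle u_1-v_1,\dots,u_n-v_n\rangle$, $d_R(\mathbf{u},C)=\min_{\mathbf{c}\in C}d_R(\mathbf{u},\mathbf{c})$. The Gabidulin code of dimension $k$ is $\mathcal{G}=\{(v(g_1),\dots,v(g_n)) : v\in\mathcal{L}_q(x,\mathbb{F}_{q^m}),\ v=0\text{ or }\deg_q(v)<k\}$. *)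

theory Defs
  imports Main "HOL-Computational_Algebra.Primes" "Jordan_Normal_Form.Determinant"
begin

text \<open>Ambient field F_{q^m} is a finite field type 'a with CARD('a) = q^m.
  The subfield F_q is the set of fixed points of the q-Frobenius.
  Vectors/families are functions nat => 'a, indexed from 0.\<close>

definition prime_power :: "nat \<Rightarrow> bool" where
  "prime_power q \<longleftrightarrow> (\<exists>p e. prime p \<and> 0 < e \<and> q = p ^ e)"

definition Fq :: "nat \<Rightarrow> 'a::field set" where
  "Fq q = {x. x ^ q = x}"

definition lin_indep_Fq :: "nat \<Rightarrow> (nat \<Rightarrow> 'a::field) \<Rightarrow> nat \<Rightarrow> bool" where
  "lin_indep_Fq q v r \<longleftrightarrow>
     (\<forall>c. (\<forall>i<r. c i \<in> Fq q) \<longrightarrow> (\<Sum>i<r. c i * v i) = 0 \<longrightarrow> (\<forall>i<r. c i = 0))"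

definition span_Fq :: "nat \<Rightarrow> (nat \<Rightarrow> 'a::field) \<Rightarrow> nat \<Rightarrow> 'a set" where
  "span_Fq q v r = {\<Sum>i<r. c i * v i | c. \<forall>i<r. c i \<in> Fq q}"

definition dim_Fq :: "nat \<Rightarrow> 'a::{finite,field} set \<Rightarrow> nat" where
  "dim_Fq q V = Max {r. \<exists>b. (\<forall>i<r. b i \<in> V) \<and> lin_indep_Fq q b r}"

definition rank_dist :: "nat \<Rightarrow> nat \<Rightarrow> (nat \<Rightarrow> 'a::{finite,field}) \<Rightarrow> (nat \<Rightarrow> 'a) \<Rightarrow> nat" where
  "rank_dist q n u v = dim_Fq q (span_Fq q (\<lambda>i. u i - v i) n)"

definition rank_dist_code :: "nat \<Rightarrow> nat \<Rightarrow> (nat \<Rightarrow> 'a::{finite,field}) \<Rightarrow> (nat \<Rightarrow> 'a) set \<Rightarrow> nat" where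
  "rank_dist_code q n u C = Min (rank_dist q n u ` C)"

definition lin_poly_eval :: "nat \<Rightarrow> nat \<Rightarrow> (nat \<Rightarrow> 'a::field) \<Rightarrow> 'a \<Rightarrow> 'a" where
  "lin_poly_eval q N a x = (\<Sum>i<N. a i * x ^ (q ^ i))"

definition gabidulin :: "nat \<Rightarrow> nat \<Rightarrow> nat \<Rightarrow> (nat \<Rightarrow> 'a::field) \<Rightarrow> (nat \<Rightarrow> 'a) set" where
  "gabidulin q n k g =
     {(\<lambda>i. if i < n then lin_poly_eval q k v (g i) else 0) | v. True}"

definition moore_mat :: "nat \<Rightarrow> nat \<Rightarrow> nat \<Rightarrow> (nat \<Rightarrow> 'a::field) \<Rightarrow> 'a mat" where
  "moore_mat q t s b = mat t s (\<lambda>(i, j). b j ^ (q ^ i))"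

text \<open>R_j(b_1..b_s): delete the row with exponent q^j from the (s+1) x s Moore matrix.\<close>
definition moore_del :: "nat \<Rightarrow> nat \<Rightarrow> nat \<Rightarrow> (nat \<Rightarrow> 'a::field) \<Rightarrow> 'a mat" where
  "moore_del q j s b = mat s s (\<lambda>(i, l). b l ^ (q ^ (if i < j then i else Suc i)))"

end

theory Submission imports Defs "HOL-Computational_Algebra.Polynomial" "HOL-Library.FuncSet" "HOL-Number_Theory.Residues"
begin


section \<open>Frobenius\<close>

locale frob =
  fixes q :: nat and F :: "'a::{finite,field} set"
  assumes F_def: "F = Fq q"
    and q2: "2 \<le> q"
    and fr: "\<And>x y::'a. (x+y)^q = x^q + y^q"
begin

lemma frp_add: "(x+y::'a)^(q^i) = x^(q^i) + y^(q^i)"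
proof (induction i)
  case (Suc i) thus ?case by (simp add: power_mult fr mult.commute[of q])
qed simp

lemma frp_zero: "(0::'a)^(q^i) = 0"
  using q2 by simp

lemma frp_neg: "(-x::'a)^(q^i) = -(x^(q^i))"
proof -
  have "(x + -x)^(q^i) = x^(q^i) + (-x)^(q^i)" by (rule frp_add)
  hence "x^(q^i) + (-x)^(q^i) = 0" using frp_zero by simp
  thus ?thesis by (simp add: eq_neg_iff_add_eq_0 add.commute)
qed

lemma frp_diff: "(x-y::'a)^(q^i) = x^(q^i) - y^(q^i)"
  using frp_add[of x "-y" i] frp_neg[of y i] by simp

lemma frp_sum: "(\<Sum>j\<in>A. h j :: 'a)^(q^i) = (\<Sum>j\<in>A. h j ^ (q^i))"
  by (induction A rule: infinite_finite_induct) (auto simp: frp_zero frp_add)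

lemma F_pow: "c \<in> F \<Longrightarrow> c^(q^i) = c"
proof (induction i)
  case (Suc i) thus ?case by (simp add: power_mult F_def Fq_def mult.commute[of q])
qed simp

lemma F_zero[simp]: "0 \<in> F" using q2 by (simp add: F_def Fq_def)
lemma F_one[simp]: "1 \<in> F" by (simp add: F_def Fq_def)
lemma F_add: "a \<in> F \<Longrightarrow> b \<in> F \<Longrightarrow> a + b \<in> F"
  using fr by (simp add: F_def Fq_def)
lemma F_neg: "a \<in> F \<Longrightarrow> -a \<in> F"
  using frp_neg[of a 1] by (simp add: F_def Fq_def)
lemma F_diff: "a \<in> F \<Longrightarrow> b \<in> F \<Longrightarrow> a - b \<in> F"
  using F_add[of a "-b"] F_neg[of b] by simp
lemma F_mult: "a \<in> F \<Longrightarrow> b \<in> F \<Longrightarrow> a * b \<in> F"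
  by (simp add: F_def Fq_def power_mult_distrib)
lemma F_divide: "a \<in> F \<Longrightarrow> b \<in> F \<Longrightarrow> a / b \<in> F"
  by (simp add: F_def Fq_def power_divide)
lemma F_sum: "(\<And>j. j \<in> A \<Longrightarrow> h j \<in> F) \<Longrightarrow> sum h A \<in> F"
  by (induction A rule: infinite_finite_induct) (auto simp: F_add)

lemma frp_smult: "c \<in> F \<Longrightarrow> (c * x)^(q^i) = c * x^(q^i)"
  by (simp add: power_mult_distrib F_pow)

section \<open>Linearized polynomials\<close>

lemma lp_add: "lin_poly_eval q N e (x + y::'a) = lin_poly_eval q N e x + lin_poly_eval q N e y"
  by (simp add: lin_poly_eval_def frp_add distrib_left sum.distrib)

lemma lp_zero: "lin_poly_eval q N e (0::'a) = 0"
  by (simp add: lin_poly_eval_def frp_zero)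

lemma lp_smult: "c \<in> F \<Longrightarrow> lin_poly_eval q N e (c * x::'a) = c * lin_poly_eval q N e x"
  by (simp add: lin_poly_eval_def frp_smult sum_distrib_left mult.left_commute)

lemma lp_neg: "lin_poly_eval q N e (- x::'a) = - lin_poly_eval q N e x"
  by (simp add: lin_poly_eval_def frp_neg sum_negf)

lemma lp_diff: "lin_poly_eval q N e (x - y::'a) = lin_poly_eval q N e x - lin_poly_eval q N e y"
  using lp_add[of N e x "-y"] lp_neg[of N e y] by simp

lemma lp_lincomb: "(\<And>i. i \<in> A \<Longrightarrow> c i \<in> F) \<Longrightarrow>
  lin_poly_eval q N e (\<Sum>i\<in>A. c i * (b i::'a)) = (\<Sum>i\<in>A. c i * lin_poly_eval q N e (b i))"
  by (induction A rule: infinite_finite_induct) (auto simp: lp_zero lp_add lp_smult)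

lemma q_pow_inj: "inj (\<lambda>i. q^i)"
  using q2 by (auto intro!: injI simp: power_inject_exp)

lemma root_bound:
  assumes "i0 < N" "e i0 \<noteq> 0"
  shows "card {x::'a. lin_poly_eval q N e x = 0} \<le> q^(N-1)"
proof -
  define p where "p = (\<Sum>i<N. Polynomial.monom (e i) (q^i))"
  have pe: "poly p x = lin_poly_eval q N e x" for x
    by (simp add: p_def lin_poly_eval_def poly_sum poly_monom)
  have "Polynomial.coeff p (q^i0) = (\<Sum>i<N. if q^i = q^i0 then e i else 0)"
    by (simp add: p_def coeff_sum coeff_monom)
  also have "\<dots> = (\<Sum>i<N. if i = i0 then e i else 0)"
    using q_pow_inj by (intro sum.cong) (auto dest: injD)
  also have "\<dots> = e i0" using assms by simp
  finally have "p \<noteq> 0" using assms by auto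
  have "degree p \<le> q^(N-1)"
    unfolding p_def
  proof (rule degree_sum_le)
    fix i assume "i \<in> {..<N}"
    hence "q^i \<le> q^(N-1)" using q2 by (intro power_increasing) auto
    thus "degree (Polynomial.monom (e i) (q^i)) \<le> q^(N-1)" by (rule order.trans[OF Polynomial.degree_monom_le])
  qed auto
  moreover have "card {x. poly p x = 0} \<le> degree p" by (rule card_poly_roots_bound[OF \<open>p \<noteq> 0\<close>])
  ultimately show ?thesis by (simp add: pe)
qed

end


lemma hom_count:
  fixes L :: "'a::ab_group_add \<Rightarrow> 'b::ab_group_add"
  assumes fin: "finite W"
    and add: "\<And>x y. x \<in> W \<Longrightarrow> y \<in> W \<Longrightarrow> x + y \<in> W"
    and sub: "\<And>x y. x \<in> W \<Longrightarrow> y \<in> W \<Longrightarrow> x - y \<in> W"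
    and Ladd: "\<And>x y. x \<in> W \<Longrightarrow> y \<in> W \<Longrightarrow> L (x + y) = L x + L y"
  shows "card W = card (L ` W) * card {x\<in>W. L x = 0}"
proof -
  let ?K = "{x\<in>W. L x = 0}"
  have W: "W = (\<Union>y\<in>L ` W. {x\<in>W. L x = y})" by auto
  have "card W = (\<Sum>y\<in>L ` W. card {x\<in>W. L x = y})"
    by (subst W, rule card_UN_disjoint) (use fin in auto)
  also have "\<dots> = (\<Sum>y\<in>L ` W. card ?K)"
  proof (rule sum.cong[OF refl])
    fix y assume "y \<in> L ` W"
    then obtain x0 where x0: "x0 \<in> W" "L x0 = y" by auto
    have "bij_betw (\<lambda>z. z + x0) ?K {x\<in>W. L x = y}"
    proof (rule bij_betw_byWitness[where f' = "\<lambda>x. x - x0"])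
      show "\<forall>a\<in>?K. a + x0 - x0 = a" by simp
      show "\<forall>a\<in>{x\<in>W. L x = y}. a - x0 + x0 = a" by simp
      show "(\<lambda>z. z + x0) ` ?K \<subseteq> {x\<in>W. L x = y}"
        using x0 add Ladd by auto
      show "(\<lambda>x. x - x0) ` {x\<in>W. L x = y} \<subseteq> ?K"
      proof safe
        fix x assume x: "x \<in> W" "y = L x"
        have "L x = L ((x - x0) + x0)" by simp
        also have "\<dots> = L (x - x0) + L x0" using Ladd sub x x0 by blast
        finally show "L (x - x0) = 0" using x x0 by simp
      qed (use sub x0 in auto)
    qed
    thus "card {x\<in>W. L x = y} = card ?K" by (simp add: bij_betw_same_card)
  qed
  also have "\<dots> = card (L ` W) * card ?K" by simp
  finally show ?thesis .
qed

locale frobF = frob +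
  assumes cardF: "card F = q"
begin

definition subsp :: "'a set \<Rightarrow> bool" where
  "subsp W \<longleftrightarrow> 0 \<in> W \<and> (\<forall>x\<in>W. \<forall>y\<in>W. x + y \<in> W) \<and> (\<forall>c\<in>F. \<forall>x\<in>W. c * x \<in> W)"

lemma subsp_add: "subsp W \<Longrightarrow> x \<in> W \<Longrightarrow> y \<in> W \<Longrightarrow> x + y \<in> W"
  by (simp add: subsp_def)
lemma subsp_smult: "subsp W \<Longrightarrow> c \<in> F \<Longrightarrow> x \<in> W \<Longrightarrow> c * x \<in> W"
  by (simp add: subsp_def)
lemma subsp_zero: "subsp W \<Longrightarrow> 0 \<in> W"
  by (simp add: subsp_def)
lemma subsp_neg: "subsp W \<Longrightarrow> x \<in> W \<Longrightarrow> - x \<in> W"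
  using subsp_smult[of W "-1" x] F_neg[of 1] by simp
lemma subsp_diff: "subsp W \<Longrightarrow> x \<in> W \<Longrightarrow> y \<in> W \<Longrightarrow> x - y \<in> W"
  using subsp_add[of W x "-y"] subsp_neg[of W y] by simp

lemma subsp_sum: "subsp W \<Longrightarrow> (\<And>i. i \<in> A \<Longrightarrow> c i \<in> F) \<Longrightarrow> (\<And>i. i \<in> A \<Longrightarrow> b i \<in> W)
   \<Longrightarrow> (\<Sum>i\<in>A. c i * b i) \<in> W"
  by (induction A rule: infinite_finite_induct) (auto simp: subsp_zero subsp_add subsp_smult)

lemma span_eq: "span_Fq q (v::nat\<Rightarrow>'a) r = (\<lambda>c. \<Sum>i<r. c i * v i) ` (PiE {..<r} (\<lambda>_. F))"
proof
  show "span_Fq q v r \<subseteq> (\<lambda>c. \<Sum>i<r. c i * v i) ` (PiE {..<r} (\<lambda>_. F))"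
  proof
    fix x assume "x \<in> span_Fq q v r"
    then obtain c where c: "\<forall>i<r. c i \<in> Fq q" "x = (\<Sum>i<r. c i * v i)"
      unfolding span_Fq_def by auto
    show "x \<in> (\<lambda>c. \<Sum>i<r. c i * v i) ` (PiE {..<r} (\<lambda>_. F))"
      by (rule image_eqI[of _ _ "restrict c {..<r}"]) (use c F_def in auto)
  qed
  show "(\<lambda>c. \<Sum>i<r. c i * v i) ` (PiE {..<r} (\<lambda>_. F)) \<subseteq> span_Fq q v r"
    unfolding span_Fq_def F_def by (auto simp: PiE_iff)
qed

lemma span_subsp: "subsp (span_Fq q (v::nat\<Rightarrow>'a) r)"
  unfolding subsp_def
proof safe
  show "0 \<in> span_Fq q v r"
    unfolding span_Fq_def by (rule CollectI, rule exI[of _ "\<lambda>_. 0"]) (use F_zero F_def in auto)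
next
  fix x y assume "x \<in> span_Fq q v r" "y \<in> span_Fq q v r"
  then obtain c d where "\<forall>i<r. c i \<in> Fq q" "x = (\<Sum>i<r. c i * v i)" "\<forall>i<r. d i \<in> Fq q" "y = (\<Sum>i<r. d i * v i)"
    unfolding span_Fq_def by auto
  thus "x + y \<in> span_Fq q v r"
    unfolding span_Fq_def
    by (intro CollectI exI[of _ "\<lambda>i. c i + d i"]) (auto simp: F_add[unfolded F_def] sum.distrib distrib_right)
next
  fix a x assume "a \<in> F" "x \<in> span_Fq q v r"
  then obtain c where "\<forall>i<r. c i \<in> Fq q" "x = (\<Sum>i<r. c i * v i)"
    unfolding span_Fq_def by auto
  thus "a * x \<in> span_Fq q v r"
    unfolding span_Fq_def using \<open>a \<in> F\<close>
    by (intro CollectI exI[of _ "\<lambda>i. a * c i"]) (auto simp: F_mult[unfolded F_def] F_def sum_distrib_left mult.assoc)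
qed

lemma span_mem: "i < r \<Longrightarrow> (v::nat\<Rightarrow>'a) i \<in> span_Fq q v r"
proof -
  assume i: "i < r"
  have "(\<Sum>j<r. (if j = i then 1 else 0) * v j) = (\<Sum>j<r. if j = i then v j else 0)"
    by (intro sum.cong) auto
  also have "\<dots> = v i" using i by simp
  finally have e: "v i = (\<Sum>j<r. (if j = i then 1 else 0) * v j)" by simp
  have m: "\<forall>j<r. (if j = i then 1 else 0::'a) \<in> Fq q" using F_zero F_one unfolding F_def by auto
  show ?thesis unfolding span_Fq_def
    by (intro CollectI exI[of _ "\<lambda>j. if j = i then 1 else (0::'a)"] conjI) (fact e, fact m)
qed

lemma span_le: "subsp W \<Longrightarrow> (\<And>i. i < r \<Longrightarrow> (v::nat\<Rightarrow>'a) i \<in> W) \<Longrightarrow> span_Fq q v r \<subseteq> W"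
proof
  assume W: "subsp W" and v: "\<And>i. i < r \<Longrightarrow> v i \<in> W"
  fix x assume "x \<in> span_Fq q v r"
  then obtain c where c: "\<forall>i<r. c i \<in> Fq q" "x = (\<Sum>i<r. c i * v i)" unfolding span_Fq_def by blast
  show "x \<in> W" unfolding c(2) by (rule subsp_sum[OF W]) (use c(1) v F_def in auto)
qed

lemma card_span:
  assumes li: "lin_indep_Fq q (v::nat\<Rightarrow>'a) r"
  shows "card (span_Fq q v r) = q^r"
proof -
  have "inj_on (\<lambda>c. \<Sum>i<r. c i * v i) (PiE {..<r} (\<lambda>_. F))"
  proof (rule inj_onI)
    fix c d assume c: "c \<in> PiE {..<r} (\<lambda>_. F)" and d: "d \<in> PiE {..<r} (\<lambda>_. F)"
      and eq: "(\<Sum>i<r. c i * v i) = (\<Sum>i<r. d i * v i)"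
    have "(\<Sum>i<r. (c i - d i) * v i) = 0"
      using eq by (simp add: left_diff_distrib sum_subtractf)
    moreover have "\<forall>i<r. c i - d i \<in> Fq q"
    proof (intro allI impI)
      fix i assume "i < r"
      hence "c i \<in> F" "d i \<in> F" using c d by (auto dest: PiE_mem)
      thus "c i - d i \<in> Fq q" using F_diff F_def by blast
    qed
    ultimately have z: "\<forall>i<r. c i - d i = 0" using li[unfolded lin_indep_Fq_def, THEN spec[of _ "\<lambda>i. c i - d i"]] by blast
    show "c = d"
    proof (rule PiE_ext[OF c d])
      fix i assume "i \<in> {..<r}" thus "c i = d i" using z by auto
    qed
  qed
  hence "card (span_Fq q v r) = card (PiE {..<r} (\<lambda>_. F))"
    by (simp add: span_eq card_image)
  also have "\<dots> = q^r" by (simp add: card_PiE cardF)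
  finally show ?thesis .
qed

lemma indep_extend:
  assumes li: "lin_indep_Fq q (b::nat\<Rightarrow>'a) r" and w: "w \<notin> span_Fq q b r"
  shows "lin_indep_Fq q (b(r := w)) (Suc r)"
  unfolding lin_indep_Fq_def
proof (rule allI, rule impI, rule impI)
  fix c assume c: "\<forall>i<Suc r. c i \<in> Fq q" and s: "(\<Sum>i<Suc r. c i * (b(r := w)) i) = 0"
  have s': "(\<Sum>i<r. c i * b i) + c r * w = 0"
    using s by (simp add: sum.lessThan_Suc)
  have cr: "c r = 0"
  proof (rule ccontr)
    assume nz: "c r \<noteq> 0"
    have "w = (\<Sum>i<r. (- c i / c r) * b i)"
    proof -
      have "c r * w = - (\<Sum>i<r. c i * b i)" using s' by (simp add: eq_neg_iff_add_eq_0 add.commute)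
      also have "\<dots> = c r * (\<Sum>i<r. (- c i / c r) * b i)"
        unfolding sum_distrib_left sum_negf[symmetric]
      proof (intro sum.cong refl)
        fix i
        have "c r * (- c i / c r * b i) = (c r / c r) * (- c i * b i)" by (simp add: algebra_simps)
        also have "\<dots> = - (c i * b i)" using nz by simp
        finally show "- (c i * b i) = c r * (- c i / c r * b i)" by simp
      qed
      finally show ?thesis using nz by simp
    qed
    note e = this
    have m: "\<forall>i<r. - c i / c r \<in> Fq q"
      using c F_neg F_divide by (auto simp: F_def)
    have "w \<in> span_Fq q b r" unfolding span_Fq_def
      by (intro CollectI exI[of _ "\<lambda>i. - c i / c r"] conjI) (fact e, fact m)
    thus False using w by simp
  qed
  have "\<forall>i<r. c i \<in> Fq q" using c by auto
  hence "\<forall>i<r. c i = 0" using li[unfolded lin_indep_Fq_def, THEN spec[of _ c]] s' cr by simp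
  thus "\<forall>i<Suc r. c i = 0" using cr by (auto simp: less_Suc_eq)
qed

lemma indep_bound:
  assumes "subsp W" "\<forall>i<r. (b::nat\<Rightarrow>'a) i \<in> W" "lin_indep_Fq q b r"
  shows "r \<le> card W"
proof -
  have "span_Fq q b r \<subseteq> W" using span_le assms by blast
  hence "q^r \<le> card W" using card_span[OF assms(3)] by (metis card_mono finite)
  moreover have "r < 2^r" by (rule less_exp)
  moreover have "(2::nat)^r \<le> q^r" using q2 by (rule power_mono) simp
  ultimately show ?thesis by linarith
qed

lemma dim_facts:
  assumes W: "subsp W"
  shows "\<exists>b. (\<forall>i<dim_Fq q W. b i \<in> W) \<and> lin_indep_Fq q b (dim_Fq q W) \<and> W = span_Fq q b (dim_Fq q W)"
    and "\<And>(b::nat\<Rightarrow>'a) r. \<forall>i<r. b i \<in> W \<Longrightarrow> lin_indep_Fq q b r \<Longrightarrow> r \<le> dim_Fq q W"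
proof -
  define R where "R = {r. \<exists>b. (\<forall>i<r. b i \<in> W) \<and> lin_indep_Fq q b r}"
  have dimR: "dim_Fq q W = Max R" unfolding R_def dim_Fq_def ..
  have fin: "finite R"
    by (rule finite_subset[of _ "{..card W}"]) (auto simp: R_def dest: indep_bound[OF W])
  have "0 \<in> R" unfolding R_def lin_indep_Fq_def by auto
  hence ne: "R \<noteq> {}" by auto
  show "\<And>b r. \<forall>i<r. b i \<in> W \<Longrightarrow> lin_indep_Fq q b r \<Longrightarrow> r \<le> dim_Fq q W"
    unfolding dimR using fin by (intro Max_ge) (auto simp: R_def)
  note ge = this
  have "dim_Fq q W \<in> R" unfolding dimR using fin ne by (rule Max_in)
  then obtain b where b: "\<forall>i<dim_Fq q W. b i \<in> W" "lin_indep_Fq q b (dim_Fq q W)"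
    unfolding R_def by auto
  have "W \<subseteq> span_Fq q b (dim_Fq q W)"
  proof
    fix w assume w: "w \<in> W"
    show "w \<in> span_Fq q b (dim_Fq q W)"
    proof (rule ccontr)
      assume "w \<notin> span_Fq q b (dim_Fq q W)"
      hence "lin_indep_Fq q (b(dim_Fq q W := w)) (Suc (dim_Fq q W))"
        using indep_extend b by blast
      moreover have "\<forall>i<Suc (dim_Fq q W). (b(dim_Fq q W := w)) i \<in> W"
        using b w by (auto simp: less_Suc_eq)
      ultimately have "Suc (dim_Fq q W) \<le> dim_Fq q W" using ge by blast
      thus False by simp
    qed
  qed
  moreover have "span_Fq q b (dim_Fq q W) \<subseteq> W" using span_le[OF W] b by blast
  ultimately show "\<exists>b. (\<forall>i<dim_Fq q W. b i \<in> W) \<and> lin_indep_Fq q b (dim_Fq q W) \<and> W = span_Fq q b (dim_Fq q W)"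
    using b by blast
qed

lemma card_dim: "subsp W \<Longrightarrow> card W = q ^ dim_Fq q W"
  using dim_facts(1)[of W] card_span by metis

end


context frobF
begin

lemma vanish:
  assumes li: "lin_indep_Fq q (\<beta>::nat\<Rightarrow>'a) s" and Ns: "N \<le> s"
    and z: "\<And>l. l < s \<Longrightarrow> lin_poly_eval q N x (\<beta> l) = 0"
  shows "\<forall>j<N. x j = 0"
proof (rule ccontr)
  assume "\<not> (\<forall>j<N. x j = 0)"
  then obtain j where j: "j < N" "x j \<noteq> 0" by auto
  have rb: "card {y::'a. lin_poly_eval q N x y = 0} \<le> q^(N-1)" by (rule root_bound[of j N x, OF j])
  have "span_Fq q \<beta> s \<subseteq> {y. lin_poly_eval q N x y = 0}"
  proof
    fix y assume "y \<in> span_Fq q \<beta> s"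
    then obtain c where c: "\<forall>i<s. c i \<in> Fq q" "y = (\<Sum>i<s. c i * \<beta> i)" unfolding span_Fq_def by blast
    have "lin_poly_eval q N x y = (\<Sum>i<s. c i * lin_poly_eval q N x (\<beta> i))"
      unfolding c(2) by (rule lp_lincomb) (use c(1) F_def in auto)
    also have "\<dots> = 0" using z by simp
    finally show "y \<in> {y. lin_poly_eval q N x y = 0}" by simp
  qed
  hence "q^s \<le> card {y::'a. lin_poly_eval q N x y = 0}"
    using card_span[OF li] by (metis card_mono finite)
  with rb have "q^s \<le> q^(N-1)" by linarith
  moreover have "q^(N-1) < q^s" using q2 j Ns by (intro power_strict_increasing) auto
  ultimately show False by linarith
qed

lemma moore_carrier: "moore_mat q t s b \<in> carrier_mat t s"
  by (simp add: moore_mat_def)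

lemma moore_nonzero:
  assumes li: "lin_indep_Fq q (\<beta>::nat\<Rightarrow>'a) s"
  shows "det (moore_mat q s s \<beta>) \<noteq> 0"
proof
  let ?M = "moore_mat q s s \<beta>"
  assume "det ?M = 0"
  hence "det (transpose_mat ?M) = 0" using det_transpose[OF moore_carrier[of s s \<beta>]] by simp
  then obtain v where v: "v \<in> carrier_vec s" "v \<noteq> 0\<^sub>v s" "transpose_mat ?M *\<^sub>v v = 0\<^sub>v s"
    using det_0_iff_vec_prod_zero_field[of "transpose_mat ?M" s] moore_carrier by auto
  have "lin_poly_eval q s (\<lambda>i. v $ i) (\<beta> l) = 0" if l: "l < s" for l
  proof -
    have "(transpose_mat ?M *\<^sub>v v) $ l = 0" using v(3) l by simp
    moreover have "(transpose_mat ?M *\<^sub>v v) $ l = (\<Sum>i<s. \<beta> l ^ (q ^ i) * v $ i)"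
      using l v(1) by (simp add: moore_mat_def scalar_prod_def lessThan_atLeast0)
    ultimately show ?thesis by (simp add: lin_poly_eval_def mult.commute)
  qed
  hence "\<forall>j<s. v $ j = 0" using vanish[OF li order.refl] by blast
  hence "v = 0\<^sub>v s" using v(1) by (intro eq_vecI) auto
  thus False using v(2) by simp
qed

lemma moore_del_s: "moore_del q s s b = moore_mat q s s b"
  by (rule eq_matI) (auto simp: moore_del_def moore_mat_def)

lemma cofactor_identity:
  assumes l: "l < s"
  shows "(\<Sum>i<Suc s. (b l :: 'a) ^ (q ^ i) * ((-1)^(i+s) * det (moore_del q i s b))) = 0"
proof -
  define b' where "b' = b(s := b l)"
  define N where "N = moore_mat q (Suc s) (Suc s) b'"
  have NC: "N \<in> carrier_mat (Suc s) (Suc s)" unfolding N_def by (rule moore_carrier)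
  have "det N = 0"
  proof (rule det_identical_columns[OF NC, of l s])
    show "col N l = col N s"
      by (rule eq_vecI) (use l in \<open>auto simp: N_def moore_mat_def b'_def\<close>)
  qed (use l in auto)
  moreover have "det N = (\<Sum>i<Suc s. N $$ (i, s) * cofactor N i s)"
    by (rule laplace_expansion_column[OF NC]) simp
  moreover have "N $$ (i, s) * cofactor N i s = b l ^ (q ^ i) * ((-1)^(i+s) * det (moore_del q i s b))"
    if i: "i < Suc s" for i
  proof -
    have "mat_delete N i s = moore_del q i s b"
      by (rule eq_matI) (auto simp: mat_delete_def N_def moore_mat_def moore_del_def b'_def)
    thus ?thesis using i by (simp add: cofactor_def N_def moore_mat_def b'_def)
  qed
  ultimately show ?thesis by simp
qed

definition estar :: "nat \<Rightarrow> (nat \<Rightarrow> 'a) \<Rightarrow> nat \<Rightarrow> 'a" where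
  "estar s b j = (-1)^(s-j) * det (moore_del q j s b) / det (moore_mat q s s b)"

lemma estar_s: "lin_indep_Fq q b s \<Longrightarrow> estar s b s = 1"
  using moore_nonzero by (simp add: estar_def moore_del_s)

lemma estar_root:
  assumes li: "lin_indep_Fq q b s" and l: "l < s"
  shows "lin_poly_eval q (Suc s) (estar s b) (b l) = 0"
proof -
  let ?D = "det (moore_mat q s s b)"
  have D: "?D \<noteq> 0" by (rule moore_nonzero[OF li])
  have sg: "(-1::'a)^(i+s) = (-1)^(s-i)" if "i < Suc s" for i
  proof -
    have "(-1::'a)^(i+s) = (-1)^((s - i) + 2 * i)"
      by (rule arg_cong[where f="\<lambda>n. (-1::'a)^n"]) (use that in simp)
    also have "\<dots> = (-1)^(s-i)" by (simp only: power_add power_mult) simp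
    finally show ?thesis .
  qed
  have "lin_poly_eval q (Suc s) (estar s b) (b l)
      = (\<Sum>i<Suc s. b l ^ (q ^ i) * ((-1)^(i+s) * det (moore_del q i s b))) / ?D"
    unfolding lin_poly_eval_def estar_def sum_divide_distrib
    by (intro sum.cong refl) (simp add: sg)
  also have "\<dots> = 0" using cofactor_identity[OF l] by simp
  finally show ?thesis .
qed

lemma estar_unique:
  assumes li: "lin_indep_Fq q b s" and es: "e s = 1"
    and z: "\<And>l. l < s \<Longrightarrow> lin_poly_eval q (Suc s) e (b l) = 0"
  shows "\<forall>j<s. e j = estar s b j"
proof -
  have "lin_poly_eval q s (\<lambda>j. e j - estar s b j) (b l) = 0" if l: "l < s" for l
  proof -
    have "lin_poly_eval q s (\<lambda>j. e j - estar s b j) (b l)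
       = lin_poly_eval q (Suc s) e (b l) - lin_poly_eval q (Suc s) (estar s b) (b l)"
      using es estar_s[OF li] by (simp add: lin_poly_eval_def left_diff_distrib sum_subtractf)
    thus ?thesis using z[OF l] estar_root[OF li l] by simp
  qed
  thus ?thesis using vanish[OF li order.refl, of "\<lambda>j. e j - estar s b j"] by auto
qed

end


context frobF
begin

lemma span_cong: "(\<And>i. i < r \<Longrightarrow> v i = w i) \<Longrightarrow> span_Fq q v r = span_Fq q w r"
  unfolding span_Fq_def by (metis (no_types, lifting) lessThan_iff sum.cong)

lemma span_image:
  "span_Fq q (\<lambda>i. lin_poly_eval q N e ((g::nat\<Rightarrow>'a) i)) n = lin_poly_eval q N e ` span_Fq q g n"
proof
  show "span_Fq q (\<lambda>i. lin_poly_eval q N e (g i)) n \<subseteq> lin_poly_eval q N e ` span_Fq q g n"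
  proof
    fix x assume "x \<in> span_Fq q (\<lambda>i. lin_poly_eval q N e (g i)) n"
    then obtain c where c: "\<forall>i<n. c i \<in> Fq q" "x = (\<Sum>i<n. c i * lin_poly_eval q N e (g i))"
      unfolding span_Fq_def by blast
    have "x = lin_poly_eval q N e (\<Sum>i<n. c i * g i)"
      unfolding c(2) by (rule lp_lincomb[symmetric]) (use c(1) F_def in auto)
    moreover have "(\<Sum>i<n. c i * g i) \<in> span_Fq q g n" using c(1) unfolding span_Fq_def by blast
    ultimately show "x \<in> lin_poly_eval q N e ` span_Fq q g n" by blast
  qed
  show "lin_poly_eval q N e ` span_Fq q g n \<subseteq> span_Fq q (\<lambda>i. lin_poly_eval q N e (g i)) n"
  proof
    fix x assume "x \<in> lin_poly_eval q N e ` span_Fq q g n"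
    then obtain y where y: "y \<in> span_Fq q g n" "x = lin_poly_eval q N e y" by blast
    then obtain c where c: "\<forall>i<n. c i \<in> Fq q" "y = (\<Sum>i<n. c i * g i)"
      unfolding span_Fq_def by blast
    have e: "x = (\<Sum>i<n. c i * lin_poly_eval q N e (g i))"
      unfolding y(2) c(2) by (rule lp_lincomb) (use c(1) F_def in auto)
    show "x \<in> span_Fq q (\<lambda>i. lin_poly_eval q N e (g i)) n"
      unfolding span_Fq_def by (intro CollectI exI[of _ c] conjI) (fact e, fact c(1))
  qed
qed

lemma kernel_subsp: "subsp W \<Longrightarrow> subsp {x\<in>W. lin_poly_eval q N e (x::'a) = 0}"
  unfolding subsp_def by (auto simp: lp_zero lp_add lp_smult)

lemma rank_nullity:
  assumes li: "lin_indep_Fq q (g::nat\<Rightarrow>'a) n"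
  shows "dim_Fq q (span_Fq q (\<lambda>i. lin_poly_eval q N e (g i)) n)
         + dim_Fq q {x\<in>span_Fq q g n. lin_poly_eval q N e x = 0} = n"
proof -
  let ?S = "span_Fq q g n" and ?L = "lin_poly_eval q N e"
  let ?K = "{x\<in>?S. ?L x = 0}"
  have S: "subsp ?S" by (rule span_subsp)
  have "card ?S = card (?L ` ?S) * card ?K"
    by (rule hom_count) (use S in \<open>auto simp: subsp_add subsp_diff lp_add\<close>)
  moreover have "card ?S = q^n" by (rule card_span[OF li])
  moreover have "card (?L ` ?S) = q ^ dim_Fq q (span_Fq q (\<lambda>i. ?L (g i)) n)"
    using card_dim[OF span_subsp, of "\<lambda>i. ?L (g i)" n] span_image by simp
  moreover have "card ?K = q ^ dim_Fq q ?K" by (rule card_dim[OF kernel_subsp[OF S]])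
  ultimately have "q ^ n = q ^ (dim_Fq q (span_Fq q (\<lambda>i. ?L (g i)) n) + dim_Fq q ?K)"
    by (simp add: power_add)
  thus ?thesis using q2 by (simp add: power_inject_exp)
qed

lemma kernel_dim_le:
  assumes "i0 < Suc s" "e i0 \<noteq> 0"
  shows "dim_Fq q {x\<in>span_Fq q (g::nat\<Rightarrow>'a) n. lin_poly_eval q (Suc s) e x = 0} \<le> s"
proof -
  let ?K = "{x\<in>span_Fq q g n. lin_poly_eval q (Suc s) e x = 0}"
  have "card ?K \<le> card {x::'a. lin_poly_eval q (Suc s) e x = 0}" by (rule card_mono) auto
  also have "\<dots> \<le> q ^ s" using root_bound[of i0 "Suc s" e, OF assms] by simp
  finally have "q ^ dim_Fq q ?K \<le> q ^ s" using card_dim[OF kernel_subsp[OF span_subsp]] by simp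
  thus ?thesis using q2 by (simp add: power_le_imp_le_exp)
qed

lemma main_equiv:
  fixes cf :: "nat \<Rightarrow> 'a" and g :: "nat \<Rightarrow> 'a"
  assumes li: "lin_indep_Fq q g n" and sn: "s < n" and cs: "cf s = 1" and ks: "k \<le> s"
  defines "Lv \<equiv> \<lambda>v. lin_poly_eval q (Suc s) (\<lambda>j. cf j - (if j < k then v j else 0))"
  shows "Min ((\<lambda>v. dim_Fq q (span_Fq q (\<lambda>i. Lv v (g i)) n)) ` UNIV) = n - s
     \<longleftrightarrow> (\<exists>v \<beta>. (\<forall>i<s. \<beta> i \<in> span_Fq q g n) \<and> lin_indep_Fq q \<beta> s \<and> (\<forall>l<s. Lv v (\<beta> l) = 0))"
proof -
  define R where "R v = dim_Fq q (span_Fq q (\<lambda>i. Lv v (g i)) n)" for v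
  define K where "K v = {x\<in>span_Fq q g n. Lv v x = 0}" for v
  have RT: "R v + dim_Fq q (K v) = n" for v
    unfolding R_def K_def Lv_def by (rule rank_nullity[OF li])
  have Ts: "dim_Fq q (K v) \<le> s" for v
    unfolding K_def Lv_def by (rule kernel_dim_le[of s]) (use cs ks in auto)
  have Ksub: "subsp (K v)" for v unfolding K_def Lv_def by (rule kernel_subsp[OF span_subsp])
  let ?A = "R ` UNIV"
  have finA: "finite ?A" by (rule finite_subset[of _ "{..n}"]) (use RT in \<open>auto, metis le_add1\<close>)
  have neA: "?A \<noteq> {}" by simp
  have lb: "n - s \<le> x" if "x \<in> ?A" for x using that RT Ts by (auto, metis add_diff_cancel_right' diff_le_mono2)
  have Rv: "R v = n - s \<longleftrightarrow> (\<exists>\<beta>. (\<forall>i<s. \<beta> i \<in> span_Fq q g n) \<and> lin_indep_Fq q \<beta> s \<and> (\<forall>l<s. Lv v (\<beta> l) = 0))" for v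
  proof
    assume "R v = n - s"
    hence "dim_Fq q (K v) = s" using RT[of v] Ts[of v] sn by linarith
    then obtain \<beta> where "\<forall>i<s. \<beta> i \<in> K v" "lin_indep_Fq q \<beta> s"
      using dim_facts(1)[OF Ksub[of v]] by metis
    thus "\<exists>\<beta>. (\<forall>i<s. \<beta> i \<in> span_Fq q g n) \<and> lin_indep_Fq q \<beta> s \<and> (\<forall>l<s. Lv v (\<beta> l) = 0)"
      unfolding K_def by blast
  next
    assume "\<exists>\<beta>. (\<forall>i<s. \<beta> i \<in> span_Fq q g n) \<and> lin_indep_Fq q \<beta> s \<and> (\<forall>l<s. Lv v (\<beta> l) = 0)"
    then obtain \<beta> where "\<forall>i<s. \<beta> i \<in> K v" "lin_indep_Fq q \<beta> s" unfolding K_def by blast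
    hence "s \<le> dim_Fq q (K v)" using dim_facts(2)[OF Ksub[of v]] by blast
    thus "R v = n - s" using RT[of v] Ts[of v] by linarith
  qed
  have "Min ?A = n - s \<longleftrightarrow> (\<exists>v. R v = n - s)"
  proof
    assume "Min ?A = n - s"
    moreover have "Min ?A \<in> ?A" using finA neA by (rule Min_in)
    ultimately show "\<exists>v. R v = n - s" by auto
  next
    assume "\<exists>v. R v = n - s"
    then obtain v where "R v = n - s" by blast
    hence "Min ?A \<le> n - s" using finA by (metis Min_le rangeI)
    moreover have "n - s \<le> Min ?A" using finA neA lb by simp
    ultimately show "Min ?A = n - s" by simp
  qed
  thus ?thesis using Rv unfolding R_def by blast
qed

end


lemma pow_card_same:
  fixes x :: "'a :: {finite,field}"
  shows "x ^ card (UNIV :: 'a set) = x"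
proof (cases "x = 0")
  case False
  have "x * (\<Prod>y\<in>UNIV-{0}. x * y) = x * x ^ (card (UNIV :: 'a set) - 1) * \<Prod>(UNIV-{0})"
    by (simp add: prod.distrib mult_ac)
  also have "x * x ^ (card (UNIV :: 'a set) - 1) = x ^ Suc (card (UNIV :: 'a set) - 1)"
    by (subst power_Suc) auto
  also have "Suc (card (UNIV :: 'a set) - 1) = card (UNIV :: 'a set)"
    using finite_UNIV_card_ge_0[where ?'a = 'a] by simp
  also have "(\<Prod>y\<in>UNIV-{0}. x * y) = (\<Prod>y\<in>UNIV-{0}. y)"
    by (rule prod.reindex_bij_witness[of _ "\<lambda>y. y / x" "\<lambda>y. x * y"]) (use False in auto)
  finally show ?thesis
    by simp
qed (use finite_UNIV_card_ge_0[where ?'a = 'a] in auto)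

lemma (in frob) cardF_lemma:
  assumes card: "card (UNIV :: 'a set) = q ^ m" and m: "1 \<le> m"
  shows "card F = q"
proof -
  define e :: "nat \<Rightarrow> 'a" where "e = (\<lambda>j. if j = 0 then -1 else 1)"
  let ?phi = "lin_poly_eval q 2 e"
  have phi: "?phi x = x ^ q - x" for x
    by (simp add: lin_poly_eval_def e_def numeral_2_eq_2)
  have FK: "F = {x\<in>UNIV. ?phi x = 0}" by (auto simp: F_def Fq_def phi)
  have le: "card F \<le> q"
    using root_bound[of 1 2 e] by (simp add: e_def FK)
  have hc: "card (UNIV::'a set) = card (?phi ` UNIV) * card F"
    unfolding FK by (rule hom_count) (auto simp: lp_add)
  define T where "T = lin_poly_eval q m (\<lambda>_. 1::'a)"
  have "?phi ` UNIV \<subseteq> {y. T y = 0}"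
  proof safe
    fix x :: 'a
    have "T (?phi x) = T (x ^ q - x)" by (simp only: phi)
    also have "\<dots> = (\<Sum>i<m. (x ^ (q ^ Suc i) - x ^ (q ^ i)))"
      unfolding T_def lin_poly_eval_def using frp_diff[of "x^q" x]
      by (intro sum.cong refl) (simp add: frp_diff power_mult[symmetric] mult.commute)
    also have "\<dots> = x ^ (q ^ m) - x" by (subst sum_lessThan_telescope) simp
    also have "\<dots> = 0" using pow_card_same[of x] card by simp
    finally show "T (?phi x) = 0" .
  qed
  hence "card (?phi ` UNIV) \<le> card {y. T y = 0}" by (intro card_mono) auto
  also have "\<dots> \<le> q ^ (m - 1)" unfolding T_def by (rule root_bound[of 0]) (use m in auto)
  finally have "q ^ m \<le> q ^ (m - 1) * card F" using hc card by (metis mult_le_mono1)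
  moreover have "q ^ m = q ^ (m - 1) * q" using m by (metis Suc_diff_le diff_Suc_1 mult.commute power_Suc)
  ultimately have "q \<le> card F" using q2 by simp
  with le show ?thesis by simp
qed

lemma setup_frobF:
  assumes pp: "prime_power q" and card: "card (UNIV :: 'a::{finite,field} set) = q ^ m" and m: "1 \<le> m"
  shows "frobF q (Fq q :: 'a set)"
proof -
  obtain p e where p: "prime p" "0 < e" "q = p ^ e" using pp unfolding prime_power_def by blast
  have q2: "2 \<le> q"
  proof -
    have "2 \<le> p" using p(1) by (simp add: prime_ge_2_nat)
    also have "p ^ 1 \<le> p ^ e" using p prime_gt_0_nat[of p] by (intro power_increasing) auto
    hence "p \<le> p ^ e" by simp
    finally show ?thesis using p by simp
  qed
  have cp: "CHAR('a) > 0" by (rule finite_imp_CHAR_pos) simp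
  have pc: "prime CHAR('a)" by (rule prime_CHAR_semidom[OF cp])
  have "CHAR('a) dvd p ^ (e * m)" using CHAR_dvd_CARD[where 'a='a] card p by (simp add: power_mult)
  hence "CHAR('a) dvd p" using pc prime_dvd_power by blast
  hence cpe: "CHAR('a) = p" using pc p(1) by (simp add: primes_dvd_imp_eq)
  have fr: "(x+y::'a)^q = x^q + y^q" for x y
    by (rule freshmans_dream') (use pc cpe p in auto)
  interpret frob q "Fq q :: 'a set" by unfold_locales (use q2 fr in auto)
  show ?thesis by unfold_locales (rule cardF_lemma[OF card m])
qed



theorem mainTheorem8:
  fixes q m n k d :: nat
    and g :: "nat \<Rightarrow> 'a::{finite,field}"
    and a c :: "nat \<Rightarrow> 'a"
  assumes "prime_power q"
    and "card (UNIV :: 'a set) = q ^ m"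
    and "1 \<le> k" and "1 \<le> d" and "k + d < n" and "n \<le> m"
    and "lin_indep_Fq q g n"
  defines "f \<equiv> \<lambda>x::'a. x ^ (q ^ (k + d))
                  + (\<Sum>j=1..d. (-1) ^ j * a j * x ^ (q ^ (k + d - j)))
                  + (\<Sum>i<k. c i * x ^ (q ^ i))"
  shows "rank_dist_code q n (\<lambda>i. if i < n then f (g i) else 0) (gabidulin q n k g) = n - (k + d)
     \<longleftrightarrow> (\<exists>b. (\<forall>i<k+d. b i \<in> span_Fq q g n) \<and> lin_indep_Fq q b (k + d) \<and>
            (\<forall>i\<in>{1..d}. a i = det (moore_del q (k + d - i) (k + d) b)
                                / det (moore_mat q (k + d) (k + d) b)))"
proof -
  note pp = assms(1) and card = assms(2) and k1 = assms(3) and d1 = assms(4) and sn0 = assms(5)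
    and nm = assms(6) and li = assms(7)
  interpret frobF q "Fq q :: 'a set"
    by (rule setup_frobF[OF pp card]) (use sn0 nm in auto)
  define s where "s = k + d"
  have sn: "s < n" and ks: "k \<le> s" using sn0 by (auto simp: s_def)
  define cf :: "nat \<Rightarrow> 'a" where
    "cf j = (if j = s then 1 else if k \<le> j then (-1)^(s-j) * a (s-j) else c j)" for j
  have cs: "cf s = 1" by (simp add: cf_def)
  have f_eq: "f x = lin_poly_eval q (Suc s) cf x" for x
  proof -
    have "lin_poly_eval q (Suc s) cf x = (\<Sum>j<s. cf j * x ^ q ^ j) + x ^ q ^ s"
      by (simp add: lin_poly_eval_def cs)
    also have "(\<Sum>j<s. cf j * x ^ q ^ j) = (\<Sum>j<k. cf j * x ^ q ^ j) + (\<Sum>j=k..<s. cf j * x ^ q ^ j)"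
      using ks by (simp add: lessThan_atLeast0 sum.atLeastLessThan_concat)
    also have "(\<Sum>j<k. cf j * x ^ q ^ j) = (\<Sum>i<k. c i * x ^ (q ^ i))"
      using ks by (intro sum.cong) (auto simp: cf_def)
    also have "(\<Sum>j=k..<s. cf j * x ^ q ^ j) = (\<Sum>j=1..d. (-1) ^ j * a j * x ^ (q ^ (k + d - j)))"
      by (rule sum.reindex_bij_witness[of _ "\<lambda>i. s - i" "\<lambda>j. s - j"]) (auto simp: s_def cf_def)
    finally show ?thesis unfolding f_def s_def by (simp add: algebra_simps)
  qed
  define Lv where "Lv = (\<lambda>v. lin_poly_eval q (Suc s) (\<lambda>j. cf j - (if j < k then v j else 0)))"
  have Lv_eq: "Lv v x = f x - lin_poly_eval q k v x" for v x
  proof -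
    have "Lv v x = lin_poly_eval q (Suc s) cf x - (\<Sum>j<Suc s. (if j < k then v j else 0) * x ^ q ^ j)"
      by (simp add: Lv_def lin_poly_eval_def left_diff_distrib sum_subtractf)
    also have "(\<Sum>j<Suc s. (if j < k then v j else 0) * x ^ q ^ j) = (\<Sum>j<Suc s. if j \<in> {..<k} then v j * x ^ q ^ j else 0)"
      by (intro sum.cong) auto
    also have "\<dots> = (\<Sum>j\<in>{..<Suc s} \<inter> {..<k}. v j * x ^ q ^ j)"
      by (rule sum.inter_restrict[symmetric]) simp
    also have "{..<Suc s} \<inter> {..<k} = {..<k}" using ks by auto
    finally show ?thesis by (simp add: f_eq lin_poly_eval_def)
  qed
  define u where "u = (\<lambda>i. if i < n then f (g i) else 0)"
  define cw where "cw v = (\<lambda>i. if i < n then lin_poly_eval q k v (g i) else 0)" for v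
  have gab: "gabidulin q n k g = range cw" by (auto simp: gabidulin_def cw_def)
  have rd: "rank_dist q n u (cw v) = dim_Fq q (span_Fq q (\<lambda>i. Lv v (g i)) n)" for v
    unfolding rank_dist_def by (rule arg_cong[where f="dim_Fq q"], rule span_cong) (simp add: u_def cw_def Lv_eq)
  have "rank_dist q n u ` gabidulin q n k g = (\<lambda>v. dim_Fq q (span_Fq q (\<lambda>i. Lv v (g i)) n)) ` UNIV"
    unfolding gab image_image rd ..
  hence lhs: "rank_dist_code q n u (gabidulin q n k g) = n - s \<longleftrightarrow>
      (\<exists>v \<beta>. (\<forall>i<s. \<beta> i \<in> span_Fq q g n) \<and> lin_indep_Fq q \<beta> s \<and> (\<forall>l<s. Lv v (\<beta> l) = 0))"
    unfolding rank_dist_code_def using main_equiv[of g n s cf k, OF li sn cs ks] by (simp add: Lv_def)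
  have key: "(\<exists>v. \<forall>l<s. Lv v (\<beta> l) = 0) \<longleftrightarrow>
      (\<forall>i\<in>{1..d}. a i = det (moore_del q (s - i) s \<beta>) / det (moore_mat q s s \<beta>))"
    if lb: "lin_indep_Fq q \<beta> s" for \<beta>
  proof
    assume "\<exists>v. \<forall>l<s. Lv v (\<beta> l) = 0"
    then obtain v where v: "\<forall>l<s. Lv v (\<beta> l) = 0" by blast
    define e where "e j = cf j - (if j < k then v j else 0)" for j
    have es: "e s = 1" using ks d1 cs by (simp add: e_def s_def)
    have "\<forall>j<s. e j = estar s \<beta> j"
      by (rule estar_unique[of \<beta> s e, OF lb es]) (use v in \<open>simp add: Lv_def e_def[abs_def]\<close>)
    show "\<forall>i\<in>{1..d}. a i = det (moore_del q (s - i) s \<beta>) / det (moore_mat q s s \<beta>)"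
    proof
      fix i assume i: "i \<in> {1..d}"
      hence j: "s - i < s" "k \<le> s - i" "s - (s - i) = i" by (auto simp: s_def)
      have "e (s - i) = (-1)^i * a i" using j by (simp add: e_def cf_def)
      moreover have "e (s - i) = (-1)^i * (det (moore_del q (s - i) s \<beta>) / det (moore_mat q s s \<beta>))"
        using \<open>\<forall>j<s. e j = estar s \<beta> j\<close> j by (simp add: estar_def)
      ultimately have "(-1::'a)^i * a i = (-1)^i * (det (moore_del q (s - i) s \<beta>) / det (moore_mat q s s \<beta>))"
        by simp
      thus "a i = det (moore_del q (s - i) s \<beta>) / det (moore_mat q s s \<beta>)"
        by (subst (asm) mult_left_cancel) simp_all
    qed
  next
    assume A: "\<forall>i\<in>{1..d}. a i = det (moore_del q (s - i) s \<beta>) / det (moore_mat q s s \<beta>)"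
    define v where "v j = cf j - estar s \<beta> j" for j
    have "\<forall>j<Suc s. cf j - (if j < k then v j else 0) = estar s \<beta> j"
    proof (intro allI impI)
      fix j assume j: "j < Suc s"
      show "cf j - (if j < k then v j else 0) = estar s \<beta> j"
      proof (cases "j < k")
        case True thus ?thesis by (simp add: v_def)
      next
        case False
        show ?thesis
        proof (cases "j = s")
          case True thus ?thesis using ks d1 estar_s[OF lb] cs by simp
        next
          case js: False
          hence "s - j \<in> {1..d}" using j False by (auto simp: s_def)
          hence "a (s - j) = det (moore_del q j s \<beta>) / det (moore_mat q s s \<beta>)"
            using A j js by (metis diff_diff_cancel less_Suc_eq_le)
          thus ?thesis using False js by (simp add: cf_def estar_def)
        qed
      qed
    qed
    hence "\<forall>l<s. Lv v (\<beta> l) = 0"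
      unfolding Lv_def lin_poly_eval_def using estar_root[OF lb, unfolded lin_poly_eval_def]
      by (metis (no_types, lifting) lessThan_iff sum.cong)
    thus "\<exists>v. \<forall>l<s. Lv v (\<beta> l) = 0" by blast
  qed
  show ?thesis
    unfolding u_def[symmetric] s_def[symmetric] lhs
    using key by blast
qed


end
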